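(* Let $E$ be a real finite-dimensional inner product space with inner product $(a,b)\mapsto (ab)$ and norm $|\cdot|$, and let $v:\mathbb{R}\to\mathbb{R}$ be an odd homeomorphism ($v(-\alpha)=-v(\alpha)$). For $a\neq b$ put $e=(a-b)/|a-b|$ and $v_{ab}:E\to E$, $v_{ab}(c)=c+(v((ce))-(ce))e$. Then $v_{ab}$ is a bijection with $v_{ab}^{-1}(c)=c+(v^{-1}((ce))-(ce))e$, and the map $f:E\times E\times[0,1]\to E$ given by $f(a,b,\gamma)=v_{ab}^{-1}\big((1-\gamma)v_{ab}(a)+\gamma v_{ab}(b)\big)$ for $a\ne b$ and $f(a,a,\gamma)=a$ is a continuous solution of the geodesic functional equations (with $D=E\times E$). Moreover, for all $a,b,\gamma$, $|a-f(a,b,\gamma)|+|f(a,b,\gamma)-b|=|a-b|$, so $f(a,b,\gamma)$ lies on the segment joining $a$ and $b$; in particular $f(B\times B\times[0,1])=B$ for every open ball $B\subset E$.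
   Context: For a topological manifold $M$, a solution of the geodesic functional equations is a continuous map $f:D\times[0,1]\to M$, with $D\subset M\times M$ open containing the diagonal, such that for all $(a,b)\in D$ and $\alpha,\beta,\gamma\in[0,1]$: $f(a,b,0)=a$, $f(a,b,1)=b$, $(f(a,b,\alpha),f(a,b,\beta))\in D$, and $f(a,b,(1-\gamma)\alpha+\gamma\beta)=f(f(a,b,\alpha),f(a,b,\beta),\gamma)$. *)

theory Defs
  imports "HOL-Analysis.Analysis"
begin

definition geodesic_solution :: "('a::topological_space \<times> 'a) set \<Rightarrow> ('a \<Rightarrow> 'a \<Rightarrow> real \<Rightarrow> 'a) \<Rightarrow> bool" where
  "geodesic_solution D f \<longleftrightarrow>
     open D \<and> (\<forall>a. (a, a) \<in> D) \<and>
     continuous_on (D \<times> {0..1}) (\<lambda>((a, b), t). f a b t) \<and>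
     (\<forall>a b. (a, b) \<in> D \<longrightarrow>
        f a b 0 = a \<and> f a b 1 = b \<and>
        (\<forall>\<alpha>\<in>{0..1}. \<forall>\<beta>\<in>{0..1}. \<forall>\<gamma>\<in>{0..1}.
           (f a b \<alpha>, f a b \<beta>) \<in> D \<and>
           f a b ((1 - \<gamma>) * \<alpha> + \<gamma> * \<beta>) = f (f a b \<alpha>) (f a b \<beta>) \<gamma>))"

definition unit_dir :: "'a::real_normed_vector \<Rightarrow> 'a \<Rightarrow> 'a" where
  "unit_dir a b = (1 / norm (a - b)) *\<^sub>R (a - b)"

definition vab :: "(real \<Rightarrow> real) \<Rightarrow> 'a::real_inner \<Rightarrow> 'a \<Rightarrow> 'a \<Rightarrow> 'a" where
  "vab v a b c = c + (v (c \<bullet> unit_dir a b) - c \<bullet> unit_dir a b) *\<^sub>R unit_dir a b"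

definition geo_f :: "(real \<Rightarrow> real) \<Rightarrow> 'a::real_inner \<Rightarrow> 'a \<Rightarrow> real \<Rightarrow> 'a" where
  "geo_f v a b \<gamma> =
     (if a = b then a
      else inv (vab v a b) ((1 - \<gamma>) *\<^sub>R vab v a b a + \<gamma> *\<^sub>R vab v a b b))"

end

theory Submission
  imports Defs
begin

definition Lf :: "(real \<Rightarrow> real) \<Rightarrow> 'a::real_inner \<Rightarrow> 'a \<Rightarrow> 'a" where
  "Lf g u c = c + (g (c \<bullet> u) - c \<bullet> u) *\<^sub>R u"

lemma vab_Lf: "vab v a b = Lf v (unit_dir a b)"
  by (simp add: vab_def Lf_def fun_eq_iff)

lemma unit_dir_inner: "a \<noteq> b \<Longrightarrow> unit_dir a b \<bullet> unit_dir a b = 1"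
proof -
  assume "a \<noteq> b"
  then have "norm (a - b) \<noteq> 0" by simp
  then show ?thesis unfolding unit_dir_def inner_scaleR_left inner_scaleR_right
    by (simp add: power2_eq_square[symmetric] dot_square_norm)
qed

lemma Lf_inner: "u \<bullet> u = 1 \<Longrightarrow> Lf g u c \<bullet> u = g (c \<bullet> u)"
  by (simp add: Lf_def inner_simps)

lemma Lf_comp: "u \<bullet> u = 1 \<Longrightarrow> Lf g u (Lf h u c) = Lf (g \<circ> h) u c"
proof -
  assume u: "u \<bullet> u = 1"
  have "Lf g u (Lf h u c) = Lf h u c + (g (h (c \<bullet> u)) - h (c \<bullet> u)) *\<^sub>R u"
    unfolding Lf_def[of g] Lf_inner[OF u] ..
  then show ?thesis by (simp add: Lf_def algebra_simps)
qed

lemma Lf_id: "(\<And>x. g (h x) = x) \<Longrightarrow> u \<bullet> u = 1 \<Longrightarrow> Lf g u \<circ> Lf h u = id"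
  by (simp add: fun_eq_iff Lf_comp) (simp add: Lf_def)

lemma Lf_comb:
  assumes "u \<bullet> u = 1" "a = b + l *\<^sub>R u"
  shows "Lf w u ((1 - \<gamma>) *\<^sub>R Lf v u a + \<gamma> *\<^sub>R Lf v u b)
     = b + (w ((1 - \<gamma>) * v (a \<bullet> u) + \<gamma> * v (b \<bullet> u)) - b \<bullet> u) *\<^sub>R u"
proof -
  have au: "a \<bullet> u = b \<bullet> u + l" using assms by (simp add: inner_simps)
  define m where "m = (1 - \<gamma>) * v (a \<bullet> u) + \<gamma> * v (b \<bullet> u)"
  have e1: "(1 - \<gamma>) *\<^sub>R Lf v u a + \<gamma> *\<^sub>R Lf v u b = b + ((1-\<gamma>)*l + m - b \<bullet> u - (1-\<gamma>)*l) *\<^sub>R u"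
    unfolding Lf_def m_def au using assms(2) by (simp add: algebra_simps)
  have e2: "(b + ((1-\<gamma>)*l + m - b \<bullet> u - (1-\<gamma>)*l) *\<^sub>R u) \<bullet> u = m"
    using assms(1) by (simp add: inner_simps)
  show ?thesis unfolding e1 m_def[symmetric] Lf_def[of w] e2 by (simp add: algebra_simps)
qed

lemma unit_dir_scale: "a \<noteq> b \<Longrightarrow> a = b + norm (a - b) *\<^sub>R unit_dir a b"
  by (simp add: unit_dir_def)

lemma inv_Lf:
  assumes vw: "\<And>x. w (v x) = x" "\<And>y. v (w y) = y" and u: "u \<bullet> u = 1"
  shows "inv (Lf v u) = Lf w u" "bij (Lf v u)"
  using Lf_id[of w v, OF vw(1) u] Lf_id[of v w, OF vw(2) u]
  by (auto intro: inv_unique_comp o_bij)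

lemma geo_form_u:
  assumes vw: "\<And>x. w (v x) = x" "\<And>y. v (w y) = y" and ab: "a \<noteq> b" and u: "unit_dir a b = u"
  shows "geo_f v a b \<gamma> = b + (w ((1-\<gamma>) * v (a \<bullet> u) + \<gamma> * v (b \<bullet> u)) - b \<bullet> u) *\<^sub>R u"
proof -
  have uu: "u \<bullet> u = 1" using unit_dir_inner[OF ab] u by simp
  show ?thesis
    unfolding geo_f_def using ab
    by (simp add: vab_Lf u inv_Lf[OF vw uu] Lf_comb[OF uu unit_dir_scale[OF ab, unfolded u]])
qed

lemma w_odd:
  assumes vw: "\<And>x. w (v x) = x" "\<And>y. v (w y) = y" and odd: "\<And>x. v (- x) = - v x"
  shows "w (- y) = - w y"
  by (metis vw odd)

lemma geo_form:
  assumes vw: "\<And>x. w (v x) = x" "\<And>y. v (w y) = y" and odd: "\<And>x. v (- x) = - v x"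
    and abl: "a - b = l *\<^sub>R u" and l: "l \<noteq> 0" and uu: "u \<bullet> u = 1"
  shows "geo_f v a b \<gamma> = b + (w ((1-\<gamma>) * v (a \<bullet> u) + \<gamma> * v (b \<bullet> u)) - b \<bullet> u) *\<^sub>R u"
proof -
  have u0: "u \<noteq> 0" using uu by auto
  have ab: "a \<noteq> b" using abl l u0 by auto
  have nu: "norm u = 1" using uu by (simp add: norm_eq_sqrt_inner)
  have ud: "unit_dir a b = (l / \<bar>l\<bar>) *\<^sub>R u"
    unfolding unit_dir_def abl using nu by simp
  show ?thesis
  proof (cases "l > 0")
    case True
    then have "unit_dir a b = u" using ud by simp
    then show ?thesis using geo_form_u[OF vw ab] by blast
  next
    case False
    then have ud': "unit_dir a b = - u" using ud l by simp
    have e: "(1-\<gamma>) * v (a \<bullet> - u) + \<gamma> * v (b \<bullet> - u) = - ((1-\<gamma>) * v (a \<bullet> u) + \<gamma> * v (b \<bullet> u))"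
      by (simp add: odd algebra_simps)
    from geo_form_u[OF vw ab ud', of \<gamma>] show ?thesis
      unfolding e w_odd[OF vw odd] by (simp add: algebra_simps)
  qed
qed

lemma conv_between:
  fixes x y g :: real
  assumes "0 \<le> g" "g \<le> 1"
  shows "min x y \<le> (1-g)*x + g*y \<and> (1-g)*x + g*y \<le> max x y"
proof -
  have e: "(1-g)*x + g*y = x + g*(y-x)" by (simp add: algebra_simps)
  show ?thesis
  proof (cases "x \<le> y")
    case True
    have "0 \<le> g*(y-x)" "g*(y-x) \<le> y - x"
      using assms True by (simp_all add: mult_left_le_one_le)
    then show ?thesis unfolding e using True by simp
  next
    case False
    have h1: "0 \<le> g*(x-y)" using assms False by simp
    have h2: "g*(x-y) \<le> x - y"
      by (rule mult_left_le_one_le) (use assms False in auto)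
    have h3: "g*(y-x) = - (g*(x-y))" by (simp add: algebra_simps)
    have h4: "min x y = y" "max x y = x" using False by auto
    show ?thesis unfolding e h3 h4 using h1 h2 by linarith
  qed
qed

lemma w_between:
  fixes v w :: "real \<Rightarrow> real"
  assumes vw: "\<And>x. w (v x) = x"
    and wm: "(\<forall>x y. x \<le> y \<longrightarrow> w x \<le> w y) \<or> (\<forall>x y. x \<le> y \<longrightarrow> w y \<le> w x)"
    and g: "0 \<le> g" "g \<le> 1"
  shows "min A B \<le> w ((1-g) * v A + g * v B) \<and> w ((1-g) * v A + g * v B) \<le> max A B"
proof -
  define m where "m = (1-g) * v A + g * v B"
  have mb: "min (v A) (v B) \<le> m \<and> m \<le> max (v A) (v B)"
    unfolding m_def by (rule conv_between[OF g])
  have c: "(v A \<le> m \<and> m \<le> v B) \<or> (v B \<le> m \<and> m \<le> v A)" using mb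
    by (cases "v A \<le> v B") (simp_all add: min_def max_def)
  have "(A \<le> w m \<and> w m \<le> B) \<or> (B \<le> w m \<and> w m \<le> A)"
  proof -
    have w1: "w (v A) = A" "w (v B) = B" by (rule vw)+
    from wm c show ?thesis
    proof (elim disjE conjE)
      assume M: "\<forall>x y. x \<le> y \<longrightarrow> w x \<le> w y" and h: "v A \<le> m" "m \<le> v B"
      show ?thesis using M[rule_format, OF h(1)] M[rule_format, OF h(2)] w1 by simp
    next
      assume M: "\<forall>x y. x \<le> y \<longrightarrow> w x \<le> w y" and h: "v B \<le> m" "m \<le> v A"
      show ?thesis using M[rule_format, OF h(1)] M[rule_format, OF h(2)] w1 by simp
    next
      assume M: "\<forall>x y. x \<le> y \<longrightarrow> w y \<le> w x" and h: "v A \<le> m" "m \<le> v B"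
      show ?thesis using M[rule_format, OF h(1)] M[rule_format, OF h(2)] w1 by simp
    next
      assume M: "\<forall>x y. x \<le> y \<longrightarrow> w y \<le> w x" and h: "v B \<le> m" "m \<le> v A"
      show ?thesis using M[rule_format, OF h(1)] M[rule_format, OF h(2)] w1 by simp
    qed
  qed
  then show ?thesis unfolding m_def[symmetric] by (auto simp: min_le_iff_disj le_max_iff_disj)
qed

lemma geo_seg:
  assumes vw: "\<And>x. w (v x) = x" "\<And>y. v (w y) = y"
    and wm: "(\<forall>x y. x \<le> y \<longrightarrow> w x \<le> w y) \<or> (\<forall>x y. x \<le> y \<longrightarrow> w y \<le> w x)"
    and g: "0 \<le> g" "g \<le> 1"
  shows "\<exists>\<theta>. 0 \<le> \<theta> \<and> \<theta> \<le> 1 \<and> geo_f v a b g = b + \<theta> *\<^sub>R (a - b)"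
proof (cases "a = b")
  case True
  then show ?thesis by (auto simp: geo_f_def)
next
  case False
  define u where "u = unit_dir a b"
  define n where "n = norm (a - b)"
  have n: "n > 0" using False by (simp add: n_def)
  have uu: "u \<bullet> u = 1" using unit_dir_inner[OF False] by (simp add: u_def)
  have a: "a = b + n *\<^sub>R u" using unit_dir_scale[OF False] by (simp add: u_def n_def)
  have A: "a \<bullet> u = b \<bullet> u + n" using uu by (subst a) (simp add: inner_simps)
  define \<phi> where "\<phi> = w ((1-g) * v (a \<bullet> u) + g * v (b \<bullet> u))"
  have f: "geo_f v a b g = b + (\<phi> - b \<bullet> u) *\<^sub>R u"
    using geo_form_u[OF vw False u_def[symmetric]] by (simp add: \<phi>_def)
  have bt: "b \<bullet> u \<le> \<phi> \<and> \<phi> \<le> a \<bullet> u"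
    using w_between[OF vw(1) wm g, of "a \<bullet> u" "b \<bullet> u"] A n by (simp add: \<phi>_def)
  show ?thesis
  proof (intro exI conjI)
    show "0 \<le> (\<phi> - b \<bullet> u) / n" using bt n by simp
    show "(\<phi> - b \<bullet> u) / n \<le> 1" using bt n A by simp
    show "geo_f v a b g = b + ((\<phi> - b \<bullet> u) / n) *\<^sub>R (a - b)"
    proof -
      have "a - b = n *\<^sub>R u" using a by simp
      then show ?thesis unfolding f using n by simp
    qed
  qed
qed

lemma seg_dist:
  fixes a b f :: "'a::real_normed_vector"
  assumes "0 \<le> t" "t \<le> 1" "f = b + t *\<^sub>R (a - b)"
  shows "dist a f + dist f b = dist a b"
proof -
  have "a - f = (1 - t) *\<^sub>R (a - b)" unfolding assms(3) by (simp add: algebra_simps)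
  moreover have "f - b = t *\<^sub>R (a - b)" unfolding assms(3) by (simp add: algebra_simps)
  ultimately show ?thesis using assms(1,2) unfolding dist_norm
    by (simp only: norm_scaleR) (simp add: algebra_simps)
qed

lemma geo_eq:
  fixes a b :: "'a::real_inner"
  assumes vw: "\<And>x. w (v x) = x" "\<And>y. v (w y) = y" and odd: "\<And>x. v (- x) = - v x"
  shows "geo_f v a b ((1 - g) * \<alpha> + g * \<beta>) = geo_f v (geo_f v a b \<alpha>) (geo_f v a b \<beta>) g"
proof (cases "a = b")
  case True
  then show ?thesis by (simp add: geo_f_def)
next
  case False
  define u where "u = unit_dir a b"
  define n where "n = norm (a - b)"
  have n: "n > 0" using False by (simp add: n_def)
  have uu: "u \<bullet> u = 1" using unit_dir_inner[OF False] by (simp add: u_def)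
  have a: "a = b + n *\<^sub>R u" using unit_dir_scale[OF False] by (simp add: u_def n_def)
  have A: "a \<bullet> u = b \<bullet> u + n" using uu by (subst a) (simp add: inner_simps)
  define m where "m t = (1-t) * v (a \<bullet> u) + t * v (b \<bullet> u)" for t
  define \<phi> where "\<phi> t = w (m t)" for t
  have F: "geo_f v a b t = b + (\<phi> t - b \<bullet> u) *\<^sub>R u" for t
    using geo_form_u[OF vw False u_def[symmetric]] by (simp add: \<phi>_def m_def)
  define c where "c = geo_f v a b \<alpha>"
  define d where "d = geo_f v a b \<beta>"
  define \<delta> where "\<delta> = (1 - g) * \<alpha> + g * \<beta>"
  have cu: "c \<bullet> u = \<phi> \<alpha>" unfolding c_def F using uu by (simp add: inner_simps)
  have du: "d \<bullet> u = \<phi> \<beta>" unfolding d_def F using uu by (simp add: inner_simps)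
  have cd: "c - d = (\<phi> \<alpha> - \<phi> \<beta>) *\<^sub>R u" unfolding c_def d_def F by (simp add: algebra_simps)
  have vne: "v (a \<bullet> u) \<noteq> v (b \<bullet> u)"
  proof
    assume "v (a \<bullet> u) = v (b \<bullet> u)"
    then have "w (v (a \<bullet> u)) = w (v (b \<bullet> u))" by simp
    then show False using A n by (simp add: vw(1))
  qed
  show ?thesis
  proof (cases "\<phi> \<alpha> = \<phi> \<beta>")
    case True
    then have "v (\<phi> \<alpha>) = v (\<phi> \<beta>)" by simp
    then have "m \<alpha> = m \<beta>" unfolding \<phi>_def vw(2) .
    then have "(\<alpha> - \<beta>) * (v (b \<bullet> u) - v (a \<bullet> u)) = 0" unfolding m_def by (simp add: algebra_simps)
    then have ab: "\<alpha> = \<beta>" using vne by simp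
    then have "\<delta> = \<alpha>" unfolding \<delta>_def by (simp add: algebra_simps)
    moreover have "c = d" using ab by (simp add: c_def d_def)
    ultimately show ?thesis unfolding \<delta>_def[symmetric] c_def[symmetric] d_def[symmetric]
      by (simp add: geo_f_def c_def)
  next
    case False
    have G: "geo_f v c d g = d + (w ((1-g) * v (c \<bullet> u) + g * v (d \<bullet> u)) - d \<bullet> u) *\<^sub>R u"
      by (rule geo_form[OF vw odd cd _ uu]) (use False in simp)
    have mm: "(1-g) * v (c \<bullet> u) + g * v (d \<bullet> u) = m \<delta>"
      unfolding cu du \<phi>_def vw(2) m_def \<delta>_def by (simp add: algebra_simps)
    show ?thesis unfolding \<delta>_def[symmetric] c_def[symmetric] d_def[symmetric] G
      unfolding mm
      unfolding du F d_def by (simp add: \<phi>_def uu algebra_simps)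
  qed
qed

lemma geo_01:
  fixes a b :: "'a::real_inner"
  assumes vw: "\<And>x. w (v x) = x" "\<And>y. v (w y) = y"
  shows "geo_f v a b 0 = a" "geo_f v a b 1 = b"
proof -
  show "geo_f v a b 0 = a"
  proof (cases "a = b")
    case False
    define u where "u = unit_dir a b"
    define n where "n = norm (a - b)"
    have uu: "u \<bullet> u = 1" using unit_dir_inner[OF False] by (simp add: u_def)
    have a: "a = b + n *\<^sub>R u" using unit_dir_scale[OF False] by (simp add: u_def n_def)
    have A: "a \<bullet> u = b \<bullet> u + n" using uu by (subst a) (simp add: inner_simps)
    show ?thesis using geo_form_u[OF vw False u_def[symmetric], of 0]
      by (simp add: vw A) (simp add: a[symmetric])
  qed (simp add: geo_f_def)
  show "geo_f v a b 1 = b"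
  proof (cases "a = b")
    case False
    show ?thesis using geo_form_u[OF vw False refl, of 1] by (simp add: vw)
  qed (simp add: geo_f_def)
qed

lemma geo_dist:
  fixes a b :: "'a::real_inner"
  assumes vw: "\<And>x. w (v x) = x" "\<And>y. v (w y) = y"
    and wm: "(\<forall>x y. x \<le> y \<longrightarrow> w x \<le> w y) \<or> (\<forall>x y. x \<le> y \<longrightarrow> w y \<le> w x)"
    and g: "0 \<le> g" "g \<le> 1"
  shows "dist a (geo_f v a b g) + dist (geo_f v a b g) b = dist a b"
  using geo_seg[OF vw wm g, of a b] seg_dist by blast

lemma geo_cont:
  assumes vw: "\<And>x. w (v x) = x" "\<And>y. v (w y) = y"
    and wm: "(\<forall>x y. x \<le> y \<longrightarrow> w x \<le> w y) \<or> (\<forall>x y. x \<le> y \<longrightarrow> w y \<le> w x)"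
    and contv: "continuous_on UNIV v" and contw: "continuous_on UNIV w"
  shows "continuous_on (UNIV \<times> {0..1}) (\<lambda>((a::'a::real_inner, b), t). geo_f v a b t)"
  unfolding continuous_on_eq_continuous_within
proof (intro ballI)
  fix p :: "('a \<times> 'a) \<times> real"
  assume p: "p \<in> UNIV \<times> {0..1}"
  obtain a b t where pe: "p = ((a, b), t)" by (metis prod.collapse)
  let ?f = "\<lambda>((a::'a, b), t). geo_f v a b t"
  show "continuous (at p within UNIV \<times> {0..1}) ?f"
  proof (cases "a = b")
    case False
    define G where "G = (\<lambda>p::('a \<times> 'a) \<times> real. snd (fst p) +
      (w ((1 - snd p) * v (fst (fst p) \<bullet> unit_dir (fst (fst p)) (snd (fst p)))
          + snd p * v (snd (fst p) \<bullet> unit_dir (fst (fst p)) (snd (fst p))))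
       - snd (fst p) \<bullet> unit_dir (fst (fst p)) (snd (fst p))) *\<^sub>R unit_dir (fst (fst p)) (snd (fst p)))"
    define S where "S = {p::('a \<times> 'a) \<times> real. fst (fst p) \<noteq> snd (fst p)}"
    have oS: "open S" unfolding S_def
      by (rule open_Collect_neq) (intro continuous_intros)+
    have cG: "continuous_on S G" unfolding G_def unit_dir_def
      by (intro continuous_intros continuous_on_compose2[OF contw _ subset_UNIV]
          continuous_on_compose2[OF contv _ subset_UNIV]) (auto simp: S_def)
    have "p \<in> S" using False pe by (simp add: S_def)
    then have "isCont G p" using cG oS continuous_on_eq_continuous_at by blast
    then have c1: "continuous (at p within UNIV \<times> {0..1}) G"
      by (rule continuous_at_imp_continuous_within)
    show ?thesis
    proof (rule continuous_transform_within[OF c1])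
      show "0 < dist a b / 2" using False by simp
      show "p \<in> UNIV \<times> {0..1}" by (rule p)
      fix x' :: "('a \<times> 'a) \<times> real"
      assume "x' \<in> UNIV \<times> {0..1}" "dist x' p < dist a b / 2"
      obtain a' b' t' where xe: "x' = ((a', b'), t')" by (metis prod.collapse)
      have "dist a' a \<le> dist x' p" using dist_fst_le[of "fst x'" "fst p"] dist_fst_le[of x' p]
        by (simp add: xe pe)
      moreover have "dist b' b \<le> dist x' p" using dist_snd_le[of "fst x'" "fst p"] dist_fst_le[of x' p]
        by (simp add: xe pe)
      moreover note \<open>dist x' p < dist a b / 2\<close>
      ultimately have "a' \<noteq> b'"
        using dist_triangle3[of a b a'] by (auto simp: dist_commute)
      then show "G x' = ?f x'" unfolding xe G_def
        using geo_form_u[OF vw \<open>a' \<noteq> b'\<close> refl, of t'] by simp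
    qed
  next
    case True
    show ?thesis unfolding continuous_within_eps_delta
    proof (intro allI impI)
      fix e :: real assume e: "e > 0"
      show "\<exists>d>0. \<forall>x'\<in>UNIV \<times> {0..1}. dist x' p < d \<longrightarrow> dist (?f x') (?f p) < e"
      proof (intro exI conjI ballI impI)
        show "e / 3 > 0" using e by simp
        fix x' :: "('a \<times> 'a) \<times> real"
        assume x': "x' \<in> UNIV \<times> {0..1}" and dx: "dist x' p < e / 3"
        obtain a' b' t' where xe: "x' = ((a', b'), t')" by (metis prod.collapse)
        have t': "0 \<le> t'" "t' \<le> 1" using x' xe by auto
        have d1: "dist a' a \<le> dist x' p" using dist_fst_le[of "fst x'" "fst p"] dist_fst_le[of x' p]
          by (simp add: xe pe)
        have d2: "dist b' b \<le> dist x' p" using dist_snd_le[of "fst x'" "fst p"] dist_fst_le[of x' p]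
          by (simp add: xe pe)
        have fp: "?f p = a" using True by (simp add: pe geo_f_def)
        have gd: "dist a' (geo_f v a' b' t') \<le> dist a' b'"
          using geo_dist[OF vw wm t', of a' b'] by (smt (verit) zero_le_dist)
        have "dist (geo_f v a' b' t') a \<le> dist (geo_f v a' b' t') a' + dist a' a"
          by (rule dist_triangle)
        also have "\<dots> \<le> dist a' b' + dist a' a" using gd by (simp add: dist_commute)
        also have "dist a' b' \<le> dist a' a + dist a b'" by (rule dist_triangle)
        finally have "dist (geo_f v a' b' t') a \<le> 2 * dist a' a + dist b' b"
          using True by (simp add: dist_commute)
        then show "dist (?f x') (?f p) < e" using d1 d2 dx fp xe by simp
      qed
    qed
  qed
qed

theorem mainTheorem8:
  fixes v :: "real \<Rightarrow> real"
  assumes homeo: "\<exists>w. homeomorphism UNIV UNIV v w"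
    and odd: "\<And>x. v (- x) = - v x"
  shows "(\<forall>a b::'a::euclidean_space. a \<noteq> b \<longrightarrow>
            bij (vab v a b) \<and>
            inv (vab v a b) = (\<lambda>c. c + (inv v (c \<bullet> unit_dir a b) - c \<bullet> unit_dir a b) *\<^sub>R unit_dir a b))
       \<and> geodesic_solution (UNIV :: ('a \<times> 'a) set) (geo_f v)
       \<and> (\<forall>a b::'a. \<forall>\<gamma>\<in>{0..1}. dist a (geo_f v a b \<gamma>) + dist (geo_f v a b \<gamma>) b = dist a b)
       \<and> (\<forall>(x::'a) r. (\<lambda>(a, b, \<gamma>). geo_f v a b \<gamma>) ` (ball x r \<times> ball x r \<times> {0..1}) = ball x r)"
proof -
  obtain w where h: "homeomorphism UNIV UNIV v w" using homeo by blast
  have vw: "\<And>x. w (v x) = x" "\<And>y. v (w y) = y" using h by (auto simp: homeomorphism_def)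
  have contv: "continuous_on UNIV v" and contw: "continuous_on UNIV w"
    using h by (auto simp: homeomorphism_def)
  have invv: "inv v = w"
    by (rule inv_unique_comp) (auto simp: fun_eq_iff vw)
  have injw: "inj w" by (metis injI vw(2))
  have "strict_mono_on UNIV w \<or> strict_antimono_on UNIV w"
    using injective_eq_monotone_map[of UNIV w] contw injw by simp
  then have wm: "(\<forall>x y. x \<le> y \<longrightarrow> w x \<le> w y) \<or> (\<forall>x y. x \<le> y \<longrightarrow> w y \<le> w x)"
  proof
    assume "strict_mono_on UNIV w"
    then show ?thesis by (auto intro: strict_mono_on_leD)
  next
    assume sa: "strict_antimono_on UNIV w"
    have "w y \<le> w x" if "x \<le> y" for x y
    proof (cases "x = y")
      case False
      then have "x < y" using that by simp
      then show ?thesis using sa unfolding monotone_on_def by (auto intro: less_imp_le)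
    qed simp
    then show ?thesis by blast
  qed
  have P1: "\<forall>a b::'a. a \<noteq> b \<longrightarrow> bij (vab v a b) \<and>
            inv (vab v a b) = (\<lambda>c. c + (inv v (c \<bullet> unit_dir a b) - c \<bullet> unit_dir a b) *\<^sub>R unit_dir a b)"
  proof (intro allI impI)
    fix a b :: 'a assume ab: "a \<noteq> b"
    have uu: "unit_dir a b \<bullet> unit_dir a b = 1" by (rule unit_dir_inner[OF ab])
    show "bij (vab v a b) \<and>
            inv (vab v a b) = (\<lambda>c. c + (inv v (c \<bullet> unit_dir a b) - c \<bullet> unit_dir a b) *\<^sub>R unit_dir a b)"
      unfolding vab_Lf inv_Lf[OF vw uu] invv by (simp add: inv_Lf(2)[OF vw uu] fun_eq_iff Lf_def)
  qed
  have P2: "geodesic_solution (UNIV :: ('a \<times> 'a) set) (geo_f v)"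
    unfolding geodesic_solution_def
    using geo_cont[OF vw wm contv contw] geo_01[OF vw] geo_eq[OF vw odd] by auto
  have P3: "\<forall>a b::'a. \<forall>\<gamma>\<in>{0..1}. dist a (geo_f v a b \<gamma>) + dist (geo_f v a b \<gamma>) b = dist a b"
    using geo_dist[OF vw wm] by auto
  have P4: "(\<lambda>(a, b, \<gamma>). geo_f v a b \<gamma>) ` (ball x r \<times> ball x r \<times> {0..1}) = ball x r" for x :: 'a and r
  proof
    show "(\<lambda>(a, b, \<gamma>). geo_f v a b \<gamma>) ` (ball x r \<times> ball x r \<times> {0..1}) \<subseteq> ball x r"
    proof (rule image_subsetI)
      fix p assume p: "p \<in> ball x r \<times> ball x r \<times> {0..(1::real)}"
      obtain a b g where pe: "p = (a, b, g)" by (metis prod.collapse)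
      have ab: "a \<in> ball x r" "b \<in> ball x r" and g: "0 \<le> g" "g \<le> 1" using p pe by auto
      obtain \<theta> where th: "0 \<le> \<theta>" "\<theta> \<le> 1" "geo_f v a b g = b + \<theta> *\<^sub>R (a - b)"
        using geo_seg[OF vw wm g, of a b] by blast
      have "geo_f v a b g = \<theta> *\<^sub>R a + (1 - \<theta>) *\<^sub>R b" using th(3) by (simp add: algebra_simps)
      moreover have "\<theta> *\<^sub>R a + (1 - \<theta>) *\<^sub>R b \<in> ball x r"
        by (rule convexD[OF convex_ball ab]) (use th in auto)
      ultimately show "(\<lambda>(a, b, \<gamma>). geo_f v a b \<gamma>) p \<in> ball x r" by (simp add: pe)
    qed
    show "ball x r \<subseteq> (\<lambda>(a, b, \<gamma>). geo_f v a b \<gamma>) ` (ball x r \<times> ball x r \<times> {0..1})"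
    proof
      fix y assume y: "y \<in> ball x r"
      show "y \<in> (\<lambda>(a, b, \<gamma>). geo_f v a b \<gamma>) ` (ball x r \<times> ball x r \<times> {0..1})"
        by (rule rev_image_eqI[of "(y, y, 0)"]) (use y in \<open>auto simp: geo_f_def\<close>)
    qed
  qed
  show ?thesis using P1 P2 P3 P4 by blast
qed

end
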